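(* Let $R=\mathbb{Z}_4+u\mathbb{Z}_4$ with $u^2=0$, let $n$ be odd, and let $\overline{\mu}:R^n\to R^n$, $\overline{\mu}(c_0,\dots,c_{n-1})=(c_0,(1+2u)c_1,\dots,(1+2u)^{n-1}c_{n-1})$. Then $C$ is a cyclic code over $R$ of length $n$ with minimum Lee distance $d_L$ if and only if $\overline{\mu}(C)$ is a $(1+2u)$-constacyclic code over $R$ of length $n$ with the same minimum Lee distance $d_L$.
   Context: Codes are linear ($R$-submodules of $R^n$). Cyclic: invariant under $(c_0,\dots,c_{n-1})\mapsto(c_{n-1},c_0,\dots,c_{n-2})$; $(1+2u)$-constacyclic: invariant under $(c_0,\dots,c_{n-1})\mapsto((1+2u)c_{n-1},c_0,\dots,c_{n-2})$. Lee weight on $\mathbb{Z}_4$: $w_L(0)=0,w_L(1)=w_L(3)=1,w_L(2)=2$; on $R$: $w_L(a+ub)=w_L(b)+w_L(2a+b)$; on $R^n$: sum of component weights; Lee distance $d_L(x,y)=w_L(x-y)$, and the minimum Lee distance of a code is the smallest Lee distance between distinct codewords. *)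

theory Defs
  imports Main "HOL-Library.Numeral_Type"
begin

text \<open>The ring R = Z4 + u Z4 with u^2 = 0. An element (a, b) represents a + u b.\<close>
type_synonym R = "4 \<times> 4"

definition R_add :: "R \<Rightarrow> R \<Rightarrow> R" where
  "R_add x y = (fst x + fst y, snd x + snd y)"

definition R_mul :: "R \<Rightarrow> R \<Rightarrow> R" where
  "R_mul x y = (fst x * fst y, fst x * snd y + snd x * fst y)"

definition R_zero :: R where "R_zero = (0, 0)"
definition R_one :: R where "R_one = (1, 0)"

definition unit_1_2u :: R where "unit_1_2u = (1, 2)"

fun R_pow :: "R \<Rightarrow> nat \<Rightarrow> R" where
  "R_pow x 0 = R_one"
| "R_pow x (Suc k) = R_mul x (R_pow x k)"

definition lee_Z4 :: "4 \<Rightarrow> nat" where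
  "lee_Z4 x = (if x = 0 then 0 else if x = 2 then 2 else 1)"

definition lee_R :: "R \<Rightarrow> nat" where
  "lee_R x = lee_Z4 (snd x) + lee_Z4 (2 * fst x + snd x)"

definition R_sub :: "R \<Rightarrow> R \<Rightarrow> R" where
  "R_sub x y = (fst x - fst y, snd x - snd y)"

definition lee_weight :: "R list \<Rightarrow> nat" where
  "lee_weight v = (\<Sum>x\<leftarrow>v. lee_R x)"

definition lee_dist :: "R list \<Rightarrow> R list \<Rightarrow> nat" where
  "lee_dist x y = lee_weight (map2 R_sub x y)"

definition vec_add :: "R list \<Rightarrow> R list \<Rightarrow> R list" where
  "vec_add x y = map2 R_add x y"

definition vec_smult :: "R \<Rightarrow> R list \<Rightarrow> R list" where
  "vec_smult r x = map (R_mul r) x"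

definition linear_code :: "nat \<Rightarrow> R list set \<Rightarrow> bool" where
  "linear_code n C \<longleftrightarrow>
     C \<subseteq> {v. length v = n} \<and> replicate n R_zero \<in> C \<and>
     (\<forall>x\<in>C. \<forall>y\<in>C. vec_add x y \<in> C) \<and>
     (\<forall>r. \<forall>x\<in>C. vec_smult r x \<in> C)"

definition cyc_shift :: "R list \<Rightarrow> R list" where
  "cyc_shift c = last c # butlast c"

definition constacyc_shift :: "R list \<Rightarrow> R list" where
  "constacyc_shift c = R_mul unit_1_2u (last c) # butlast c"

definition cyclic_code :: "nat \<Rightarrow> R list set \<Rightarrow> bool" where
  "cyclic_code n C \<longleftrightarrow> linear_code n C \<and> (\<forall>c\<in>C. cyc_shift c \<in> C)"

definition constacyclic_code :: "nat \<Rightarrow> R list set \<Rightarrow> bool" where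
  "constacyclic_code n C \<longleftrightarrow> linear_code n C \<and> (\<forall>c\<in>C. constacyc_shift c \<in> C)"

definition has_min_lee_dist :: "R list set \<Rightarrow> nat \<Rightarrow> bool" where
  "has_min_lee_dist C d \<longleftrightarrow>
     (\<exists>x\<in>C. \<exists>y\<in>C. x \<noteq> y \<and> lee_dist x y = d) \<and>
     (\<forall>x\<in>C. \<forall>y\<in>C. x \<noteq> y \<longrightarrow> d \<le> lee_dist x y)"

definition mu_bar :: "R list \<Rightarrow> R list" where
  "mu_bar c = map (\<lambda>i. R_mul (R_pow unit_1_2u i) (c ! i)) [0..<length c]"

end

theory Submission imports Defs begin

abbreviation "w \<equiv> unit_1_2u"

lemma four: "(4::4) = 0" by simp

lemma ww: "R_mul w w = R_one"
  by (simp add: R_mul_def unit_1_2u_def R_one_def)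

lemma w1: "R_mul w R_one = w"
  by (simp add: R_mul_def unit_1_2u_def R_one_def)

lemma one_mul[simp]: "R_mul R_one x = x"
  by (simp add: R_mul_def R_one_def)

lemma mul_assoc: "R_mul a (R_mul b c) = R_mul (R_mul a b) c"
  by (simp add: R_mul_def algebra_simps)

lemma mul_comm: "R_mul a b = R_mul b a"
  by (simp add: R_mul_def algebra_simps)

lemma mul_add: "R_mul p (R_add x y) = R_add (R_mul p x) (R_mul p y)"
  by (simp add: R_mul_def R_add_def algebra_simps)

lemma mul_sub: "R_mul p (R_sub x y) = R_sub (R_mul p x) (R_mul p y)"
  by (simp add: R_mul_def R_sub_def algebra_simps)

lemma mul_zero: "R_mul p R_zero = R_zero"
  by (simp add: R_mul_def R_zero_def)

lemma ww_x: "R_mul w (R_mul w x) = x"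
  by (simp add: mul_assoc ww)

lemma pow_w: "R_pow w i = (if even i then R_one else w)"
  by (induction i) (auto simp: ww w1)

lemma pow_pow_x: "R_mul (R_pow w i) (R_mul (R_pow w i) x) = x"
  by (simp add: pow_w ww_x)

lemma lee_w: "lee_R (R_mul w x) = lee_R x"
proof -
  have "2 * fst x + (snd x + 2 * fst x) = snd x"
    by (simp add: algebra_simps four)
  then show ?thesis by (simp add: lee_R_def R_mul_def unit_1_2u_def algebra_simps four)
qed

lemma lee_pow: "lee_R (R_mul (R_pow w i) x) = lee_R x"
  by (simp add: pow_w lee_w)

lemma len_mu[simp]: "length (mu_bar c) = length c"
  by (simp add: mu_bar_def)

lemma nth_mu[simp]: "i < length c \<Longrightarrow> mu_bar c ! i = R_mul (R_pow w i) (c ! i)"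
  by (simp add: mu_bar_def)

lemma mu_mu[simp]: "mu_bar (mu_bar c) = c"
  by (rule nth_equalityI) (auto simp: pow_pow_x)

lemma inj_mu: "inj mu_bar"
  by (metis injI mu_mu)

lemma mu_add: "length x = length y \<Longrightarrow> mu_bar (vec_add x y) = vec_add (mu_bar x) (mu_bar y)"
  by (rule nth_equalityI) (auto simp: vec_add_def mul_add)

lemma mul_lcomm: "R_mul a (R_mul b c) = R_mul b (R_mul a c)"
  by (simp add: R_mul_def algebra_simps)

lemma mu_smult: "mu_bar (vec_smult r x) = vec_smult r (mu_bar x)"
  by (rule nth_equalityI) (simp_all add: vec_smult_def mul_lcomm)

lemma mu_zero: "mu_bar (replicate n R_zero) = replicate n R_zero"
  by (rule nth_equalityI) (auto simp: mul_zero)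

lemma mu_sub: "length x = length y \<Longrightarrow> map2 R_sub (mu_bar x) (mu_bar y) = mu_bar (map2 R_sub x y)"
  by (rule nth_equalityI) (auto simp: mul_sub)

lemma lee_weight_nth: "lee_weight v = (\<Sum>i<length v. lee_R (v ! i))"
  unfolding lee_weight_def by (simp add: sum_list_sum_nth atLeast0LessThan)

lemma lee_weight_mu: "lee_weight (mu_bar v) = lee_weight v"
  unfolding lee_weight_nth by (simp add: lee_pow)

lemma lee_dist_mu: "length x = length y \<Longrightarrow> lee_dist (mu_bar x) (mu_bar y) = lee_dist x y"
  by (simp add: lee_dist_def mu_sub lee_weight_mu)

lemma shift_rel:
  assumes "length c = n" "odd n"
  shows "constacyc_shift (mu_bar c) = vec_smult w (mu_bar (cyc_shift c))"
proof (rule nth_equalityI)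
  have n0: "n > 0" using assms by (cases n) auto
  show "length (constacyc_shift (mu_bar c)) = length (vec_smult w (mu_bar (cyc_shift c)))"
    using n0 assms by (simp add: constacyc_shift_def cyc_shift_def vec_smult_def)
  fix i assume i: "i < length (constacyc_shift (mu_bar c))"
  then have i': "i < n" using n0 assms by (simp add: constacyc_shift_def)
  show "constacyc_shift (mu_bar c) ! i = vec_smult w (mu_bar (cyc_shift c)) ! i"
  proof (cases i)
    case 0
    have "c \<noteq> []" using n0 assms by auto
    have mn: "mu_bar c \<noteq> []" using \<open>c \<noteq> []\<close> by (metis len_mu length_0_conv)
    have l: "last (mu_bar c) = R_mul (R_pow w (n-1)) (c ! (n-1))"
      using assms n0 mn by (simp add: last_conv_nth)
    have e: "even (n - 1)" using assms by simp
    have l2: "last (mu_bar c) = c ! (n-1)" using l e by (simp add: pow_w)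
    have l3: "last c = c ! (n-1)" using \<open>c \<noteq> []\<close> assms by (simp add: last_conv_nth)
    show ?thesis using 0 n0 assms l2 l3
      by (simp add: constacyc_shift_def cyc_shift_def vec_smult_def ww_x)
  next
    case (Suc j)
    have j: "j < n - 1" using i' Suc by simp
    have "c \<noteq> []" using n0 assms by auto
    then show ?thesis using Suc j assms
      by (simp add: constacyc_shift_def cyc_shift_def vec_smult_def nth_butlast mul_assoc ww)
  qed
qed
lemma img_mumu: "mu_bar ` (mu_bar ` C) = C"
  by (simp add: image_image)

lemma lin_mu:
  assumes "linear_code n C" shows "linear_code n (mu_bar ` C)"
proof -
  have len: "\<And>x. x \<in> C \<Longrightarrow> length x = n" using assms unfolding linear_code_def by auto
  have "replicate n R_zero \<in> mu_bar ` C"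
    using assms unfolding linear_code_def by (metis image_eqI mu_zero)
  moreover have "vec_add x y \<in> mu_bar ` C" if hx: "x \<in> mu_bar ` C" "y \<in> mu_bar ` C" for x y
  proof -
    obtain a b where ab: "a \<in> C" "b \<in> C" "x = mu_bar a" "y = mu_bar b" using hx by blast
    have "vec_add x y = mu_bar (vec_add a b)" using ab len by (simp add: mu_add)
    moreover have "vec_add a b \<in> C" using ab assms unfolding linear_code_def by blast
    ultimately show ?thesis by blast
  qed
  moreover have "vec_smult r x \<in> mu_bar ` C" if hx: "x \<in> mu_bar ` C" for r x
  proof -
    obtain a where ab: "a \<in> C" "x = mu_bar a" using hx by blast
    have "vec_smult r x = mu_bar (vec_smult r a)" using ab by (simp add: mu_smult)
    moreover have "vec_smult r a \<in> C" using ab assms unfolding linear_code_def by blast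
    ultimately show ?thesis by blast
  qed
  ultimately show ?thesis using len unfolding linear_code_def by auto
qed

lemma lin_len: "linear_code n C \<Longrightarrow> x \<in> C \<Longrightarrow> length x = n"
  unfolding linear_code_def by auto

lemma hmd_mu:
  assumes "\<And>x. x \<in> C \<Longrightarrow> length x = n"
  shows "has_min_lee_dist (mu_bar ` C) d = has_min_lee_dist C d"
proof -
  have eq: "mu_bar x = mu_bar y \<longleftrightarrow> x = y" for x y by (metis mu_mu)
  have ld: "x \<in> C \<Longrightarrow> y \<in> C \<Longrightarrow> lee_dist (mu_bar x) (mu_bar y) = lee_dist x y" for x y
    using assms by (simp add: lee_dist_mu)
  have A: "(\<exists>x\<in>mu_bar ` C. \<exists>y\<in>mu_bar ` C. x \<noteq> y \<and> lee_dist x y = d)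
      \<longleftrightarrow> (\<exists>x\<in>C. \<exists>y\<in>C. x \<noteq> y \<and> lee_dist x y = d)"
  proof
    assume "\<exists>x\<in>mu_bar ` C. \<exists>y\<in>mu_bar ` C. x \<noteq> y \<and> lee_dist x y = d"
    then obtain a b where "a \<in> C" "b \<in> C" "mu_bar a \<noteq> mu_bar b" "lee_dist (mu_bar a) (mu_bar b) = d"
      by blast
    then show "\<exists>x\<in>C. \<exists>y\<in>C. x \<noteq> y \<and> lee_dist x y = d" using ld by metis
  next
    assume "\<exists>x\<in>C. \<exists>y\<in>C. x \<noteq> y \<and> lee_dist x y = d"
    then obtain a b where "a \<in> C" "b \<in> C" "a \<noteq> b" "lee_dist a b = d" by blast
    then show "\<exists>x\<in>mu_bar ` C. \<exists>y\<in>mu_bar ` C. x \<noteq> y \<and> lee_dist x y = d"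
      using ld eq by (metis imageI)
  qed
  have B: "(\<forall>x\<in>mu_bar ` C. \<forall>y\<in>mu_bar ` C. x \<noteq> y \<longrightarrow> d \<le> lee_dist x y)
      \<longleftrightarrow> (\<forall>x\<in>C. \<forall>y\<in>C. x \<noteq> y \<longrightarrow> d \<le> lee_dist x y)"
  proof
    assume H: "\<forall>x\<in>mu_bar ` C. \<forall>y\<in>mu_bar ` C. x \<noteq> y \<longrightarrow> d \<le> lee_dist x y"
    show "\<forall>x\<in>C. \<forall>y\<in>C. x \<noteq> y \<longrightarrow> d \<le> lee_dist x y"
    proof (intro ballI impI)
      fix x y assume "x \<in> C" "y \<in> C" "x \<noteq> y"
      then have "d \<le> lee_dist (mu_bar x) (mu_bar y)" using H eq by blast
      then show "d \<le> lee_dist x y" using ld \<open>x \<in> C\<close> \<open>y \<in> C\<close> by simp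
    qed
  next
    assume H: "\<forall>x\<in>C. \<forall>y\<in>C. x \<noteq> y \<longrightarrow> d \<le> lee_dist x y"
    show "\<forall>x\<in>mu_bar ` C. \<forall>y\<in>mu_bar ` C. x \<noteq> y \<longrightarrow> d \<le> lee_dist x y"
    proof (intro ballI impI)
      fix x y assume "x \<in> mu_bar ` C" "y \<in> mu_bar ` C" "x \<noteq> y"
      then obtain a b where "a \<in> C" "b \<in> C" "x = mu_bar a" "y = mu_bar b" "a \<noteq> b" by blast
      then show "d \<le> lee_dist x y" using H ld by simp
    qed
  qed
  show ?thesis unfolding has_min_lee_dist_def using A B by simp
qed

lemma lin_smult: "linear_code n C \<Longrightarrow> x \<in> C \<Longrightarrow> vec_smult r x \<in> C"
  unfolding linear_code_def by blast

lemma cyc_to: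
  assumes "cyclic_code n C" "odd n" shows "constacyclic_code n (mu_bar ` C)"
proof -
  have lin: "linear_code n C" using assms unfolding cyclic_code_def by simp
  have sh: "\<And>c. c \<in> C \<Longrightarrow> cyc_shift c \<in> C" using assms unfolding cyclic_code_def by simp
  have "constacyc_shift x \<in> mu_bar ` C" if hx: "x \<in> mu_bar ` C" for x
  proof -
    obtain a where a: "a \<in> C" "x = mu_bar a" using hx by blast
    have "constacyc_shift x = vec_smult w (mu_bar (cyc_shift a))"
      using a lin_len[OF lin] assms(2) by (simp add: shift_rel)
    also have "\<dots> = mu_bar (vec_smult w (cyc_shift a))" by (simp add: mu_smult)
    finally have e: "constacyc_shift x = mu_bar (vec_smult w (cyc_shift a))" .
    have "vec_smult w (cyc_shift a) \<in> C" using lin_smult[OF lin sh[OF a(1)]] .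
    then show ?thesis unfolding e by (rule imageI)
  qed
  then show ?thesis using lin_mu[OF lin] unfolding constacyclic_code_def by (intro conjI ballI)
qed

lemma const_to:
  assumes "constacyclic_code n D" "odd n" shows "cyclic_code n (mu_bar ` D)"
proof -
  have lin: "linear_code n D" using assms unfolding constacyclic_code_def by simp
  have sh: "\<And>c. c \<in> D \<Longrightarrow> constacyc_shift c \<in> D" using assms unfolding constacyclic_code_def by simp
  have "cyc_shift x \<in> mu_bar ` D" if hx: "x \<in> mu_bar ` D" for x
  proof -
    obtain a where a: "a \<in> D" "x = mu_bar a" using hx by blast
    have l: "length x = n" using a lin_len[OF lin] by simp
    have "constacyc_shift a = vec_smult w (mu_bar (cyc_shift x))"
      using shift_rel[OF l assms(2)] a by simp
    then have "vec_smult w (constacyc_shift a) = mu_bar (cyc_shift x)"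
      by (simp add: vec_smult_def ww_x comp_def)
    then have e: "cyc_shift x = mu_bar (vec_smult w (constacyc_shift a))"
      by (metis mu_mu)
    have "vec_smult w (constacyc_shift a) \<in> D" using lin_smult[OF lin sh[OF a(1)]] .
    then show ?thesis unfolding e by (rule imageI)
  qed
  then show ?thesis using lin_mu[OF lin] unfolding cyclic_code_def by (intro conjI ballI)
qed

theorem corollary4p8:
  fixes n :: nat and C :: "R list set" and d :: nat
  assumes "odd n"
  shows "(cyclic_code n C \<and> has_min_lee_dist C d) \<longleftrightarrow>
         (constacyclic_code n (mu_bar ` C) \<and> has_min_lee_dist (mu_bar ` C) d)"
proof
  assume h: "cyclic_code n C \<and> has_min_lee_dist C d"
  then have lin: "linear_code n C" unfolding cyclic_code_def by simp
  have "constacyclic_code n (mu_bar ` C)" using cyc_to h assms by simp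
  moreover have "has_min_lee_dist (mu_bar ` C) d"
    using h hmd_mu[OF lin_len[OF lin]] by simp
  ultimately show "constacyclic_code n (mu_bar ` C) \<and> has_min_lee_dist (mu_bar ` C) d" ..
next
  assume h: "constacyclic_code n (mu_bar ` C) \<and> has_min_lee_dist (mu_bar ` C) d"
  then have lin: "linear_code n (mu_bar ` C)" unfolding constacyclic_code_def by simp
  have len: "length x = n" if "x \<in> C" for x
    using lin_len[OF lin imageI[OF that]] by simp
  have "cyclic_code n (mu_bar ` (mu_bar ` C))" using const_to h assms by simp
  then have "cyclic_code n C" by (simp only: img_mumu)
  moreover have "has_min_lee_dist C d" using h hmd_mu[OF len] by simp
  ultimately show "cyclic_code n C \<and> has_min_lee_dist C d" ..
qed

end
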